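(* Let $s,t\in\mathbb{R}$ with $s\ne0$, $t\ne0$, $s^2+4t>0$, and $q=\varphi'_{s,t}/\varphi_{s,t}$. (1) If $\lvert q\rvert<1$, then $\mathrm{Exp}'_{s,t}(z)=\prod_{k=0}^\infty\Big(1+(\varphi_{s,t}-\varphi'_{s,t})\frac{\varphi_{s,t}'^{\,k}}{\varphi_{s,t}^{k+1}}z\Big)$. (2) If $\lvert q\rvert>1$, then on the disk of convergence of its series, $\mathrm{Exp}'_{s,t}(z)=\prod_{k=0}^\infty\frac{\varphi_{s,t}'^{\,k+1}}{\varphi_{s,t}'^{\,k+1}+(\varphi_{s,t}-\varphi'_{s,t})\varphi_{s,t}^{k}z}$, and this product gives the meromorphic continuation of $\mathrm{Exp}'_{s,t}$ to $\mathbb{C}$.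
   Context: $\varphi_{s,t}=\frac{s+\sqrt{s^2+4t}}{2}$, $\varphi'_{s,t}=\frac{s-\sqrt{s^2+4t}}{2}$. Generalized Fibonacci polynomials: $\{0\}_{s,t}=0$, $\{1\}_{s,t}=1$, $\{n+2\}_{s,t}=s\{n+1\}_{s,t}+t\{n\}_{s,t}$; Fibotorial $\{n\}_{s,t}!=\prod_{k=1}^n\{k\}_{s,t}$, $\{0\}_{s,t}!=1$. $\mathrm{Exp}'_{s,t}(z)=\sum_{n=0}^\infty\varphi_{s,t}'^{\,\binom n2}\frac{z^n}{\{n\}_{s,t}!}$. *)

theory Defs
  imports "HOL-Analysis.Analysis" "HOL-Complex_Analysis.Complex_Analysis"
begin

definition phi :: "real \<Rightarrow> real \<Rightarrow> real" where
  "phi s t = (s + sqrt (s\<^sup>2 + 4 * t)) / 2"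

definition phi' :: "real \<Rightarrow> real \<Rightarrow> real" where
  "phi' s t = (s - sqrt (s\<^sup>2 + 4 * t)) / 2"

fun gfib :: "real \<Rightarrow> real \<Rightarrow> nat \<Rightarrow> real" where
  "gfib s t 0 = 0"
| "gfib s t (Suc 0) = 1"
| "gfib s t (Suc (Suc n)) = s * gfib s t (Suc n) + t * gfib s t n"

definition fibotorial :: "real \<Rightarrow> real \<Rightarrow> nat \<Rightarrow> real" where
  "fibotorial s t n = (\<Prod>k=1..n. gfib s t k)"

definition Exp'_coeff :: "real \<Rightarrow> real \<Rightarrow> nat \<Rightarrow> complex" where
  "Exp'_coeff s t n = complex_of_real (phi' s t ^ (n choose 2) / fibotorial s t n)"

definition Exp' :: "real \<Rightarrow> real \<Rightarrow> complex \<Rightarrow> complex" where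
  "Exp' s t z = (\<Sum>n. Exp'_coeff s t n * z ^ n)"

end

theory Submission
  imports Defs
begin

definition eul :: "complex \<Rightarrow> complex \<Rightarrow> nat \<Rightarrow> complex" where
  "eul r d n = (\<Prod>j<n. d * r ^ j / (1 - r ^ Suc j))"

lemma eul_0 [simp]: "eul r d 0 = 1" by (simp add: eul_def)

lemma eul_Suc: "eul r d (Suc n) = eul r d n * (d * r ^ n / (1 - r ^ Suc n))"
  by (simp add: eul_def)

lemma eul_rec:
  assumes "r ^ Suc n \<noteq> 1"
  shows "eul r d (Suc n) * (1 - r ^ Suc n) = d * r ^ n * eul r d n"
  using assms by (simp add: eul_Suc)

lemma eul_summable:
  assumes r: "norm r < 1"
  shows "summable (\<lambda>n. eul r d n * z ^ n)"
proof -
  define \<epsilon> where "\<epsilon> = (1 - norm r) / (2 * (norm d * norm z + 1))"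
  have "\<epsilon> > 0" using r unfolding \<epsilon>_def by (intro divide_pos_pos) (auto intro: add_nonneg_pos)
  have "(\<lambda>n. norm r ^ n) \<longlonglongrightarrow> 0" using r by (intro LIMSEQ_power_zero) auto
  from order_tendstoD(2)[OF this \<open>\<epsilon> > 0\<close>] obtain N where N: "\<And>n. n \<ge> N \<Longrightarrow> norm r ^ n < \<epsilon>"
    by (auto simp: eventually_sequentially)
  show ?thesis
  proof (rule summable_ratio_test[of "1/2" N])
    fix n assume n: "n \<ge> N"
    have nr: "norm (r ^ Suc n) \<le> norm r"
    proof -
      have "norm (r ^ Suc n) = norm r * norm r ^ n" by (simp add: norm_mult norm_power)
      also have "\<dots> \<le> norm r" using r by (intro mult_left_le power_le_one) auto
      finally show ?thesis .
    qed
    have den: "norm (1 - r ^ Suc n) \<ge> 1 - norm r"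
      using norm_triangle_ineq2[of 1 "r ^ Suc n"] nr by (simp add: norm_minus_commute) 
    have pos: "1 - norm r > 0" using r by simp
    have "norm (d * r ^ n / (1 - r ^ Suc n) * z) = norm d * norm r ^ n * norm z / norm (1 - r ^ Suc n)"
      by (simp add: norm_mult norm_divide norm_power)
    also have "\<dots> \<le> norm d * norm r ^ n * norm z / (1 - norm r)"
      using den pos by (intro divide_left_mono mult_pos_pos) auto
    also have "\<dots> \<le> norm d * \<epsilon> * norm z / (1 - norm r)"
      using N[OF n] pos by (intro divide_right_mono mult_right_mono mult_left_mono) auto
    also have "\<dots> = (norm d * norm z) / (norm d * norm z + 1) / 2"
    proof -
      have "norm d * norm z + 1 > 0" by (intro add_nonneg_pos) auto
      then show ?thesis using pos unfolding \<epsilon>_def by (simp add: divide_simps)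
    qed
    also have "\<dots> \<le> 1 / 2"
    proof -
      have "norm d * norm z + 1 > 0" by (intro add_nonneg_pos) auto
      then show ?thesis by (simp add: divide_simps)
    qed
    finally have "norm (d * r ^ n / (1 - r ^ Suc n) * z) \<le> 1/2" .
    then have "norm (d * r ^ n / (1 - r ^ Suc n) * z) * norm (eul r d n * z ^ n) \<le> 1/2 * norm (eul r d n * z ^ n)"
      by (intro mult_right_mono) auto
    then show "norm (eul r d (Suc n) * z ^ Suc n) \<le> 1 / 2 * norm (eul r d n * z ^ n)"
      by (simp add: eul_Suc norm_mult[symmetric] mult_ac)
  qed simp
qed

lemma fe_series:
  fixes e :: "nat \<Rightarrow> complex"
  assumes rec: "\<And>n. e (Suc n) * (1 - r ^ Suc n) = c * r ^ n * e n"
    and s1: "summable (\<lambda>n. e n * y ^ n)" and s2: "summable (\<lambda>n. e n * (r * y) ^ n)"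
  shows "(\<Sum>n. e n * y ^ n) = (1 + c * y) * (\<Sum>n. e n * (r * y) ^ n)"
proof -
  define g where "g n = e n * y ^ n - e n * (r * y) ^ n" for n
  have sg: "summable g" unfolding g_def using s1 s2 by (rule summable_diff)
  have "(\<Sum>n. e n * y ^ n) - (\<Sum>n. e n * (r * y) ^ n) = suminf g"
    unfolding g_def using s1 s2 by (rule suminf_diff)
  also have "\<dots> = (\<Sum>n. g (Suc n))" using suminf_split_head[OF sg] by (simp add: g_def)
  also have "(\<lambda>n. g (Suc n)) = (\<lambda>n. c * y * (e n * (r * y) ^ n))"
  proof
    fix n
    have "g (Suc n) = e (Suc n) * (1 - r ^ Suc n) * y ^ Suc n"
      by (simp add: g_def algebra_simps power_mult_distrib)
    also have "\<dots> = c * y * (e n * (r * y) ^ n)" using rec[of n] by (simp add: power_mult_distrib mult_ac)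
    finally show "g (Suc n) = c * y * (e n * (r * y) ^ n)" .
  qed
  also have "(\<Sum>n. c * y * (e n * (r * y) ^ n)) = c * y * (\<Sum>n. e n * (r * y) ^ n)"
    using s2 by (rule suminf_mult)
  finally show ?thesis by (simp add: algebra_simps)
qed

lemma pow_x_tendsto:
  fixes r x :: complex
  assumes "norm r < 1"
  shows "(\<lambda>n. r ^ n * x) \<longlonglongrightarrow> 0"
  using tendsto_mult[OF LIMSEQ_power_zero[OF assms] tendsto_const[of x]] by simp

lemma prod_fe:
  fixes r x :: complex and G :: "complex \<Rightarrow> complex" and u :: "nat \<Rightarrow> complex"
  assumes r: "norm r < 1" and cont: "isCont G 0" and G0: "G 0 = 1"
    and fe: "\<And>k. G (r ^ k * x) = u k * G (r ^ Suc k * x)"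
    and cp: "convergent_prod u"
  shows "u has_prod G x"
proof -
  have P: "G x = (\<Prod>k<n. u k) * G (r ^ n * x)" for n
  proof (induction n)
    case 0 then show ?case by simp
  next
    case (Suc n)
    then show ?case using fe[of n] by (simp add: mult_ac)
  qed
  have t1: "(\<lambda>n. G (r ^ n * x)) \<longlonglongrightarrow> 1"
    using isCont_tendsto_compose[OF cont pow_x_tendsto[OF r, of x]] G0 by simp
  have t2: "(\<lambda>n. \<Prod>k<n. u k) \<longlonglongrightarrow> prodinf u"
  proof -
    have "(\<lambda>n. \<Prod>k<Suc n. u k) \<longlonglongrightarrow> prodinf u"
      using convergent_prod_LIMSEQ[OF cp] by (simp add: lessThan_Suc_atMost)
    then show ?thesis by (rule LIMSEQ_imp_Suc)
  qed
  have "(\<lambda>n. (\<Prod>k<n. u k) * G (r ^ n * x)) \<longlonglongrightarrow> prodinf u * 1"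
    by (intro tendsto_mult t1 t2)
  moreover have "(\<lambda>n. (\<Prod>k<n. u k) * G (r ^ n * x)) = (\<lambda>n. G x)" using P by simp
  ultimately have "(\<lambda>n. G x) \<longlonglongrightarrow> prodinf u" by simp
  then have "G x = prodinf u" by (rule LIMSEQ_const_iff[THEN iffD1])
  then show ?thesis using cp by (simp add: has_prod_iff)
qed

lemma const_fe:
  fixes r x :: complex and K :: "complex \<Rightarrow> complex"
  assumes r: "norm r < 1" and cont: "isCont K 0"
    and fe: "\<And>k. K (r ^ Suc k * x) = K (r ^ k * x)"
  shows "K x = K 0"
proof -
  have P: "K (r ^ n * x) = K x" for n
  proof (induction n)
    case (Suc n) show ?case by (simp only: fe Suc.IH)
  qed simp
  have "(\<lambda>n. K (r ^ n * x)) \<longlonglongrightarrow> K 0"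
    using isCont_tendsto_compose[OF cont pow_x_tendsto[OF r, of x]] by simp
  then have "(\<lambda>n. K x) \<longlonglongrightarrow> K 0" by (simp only: P)
  then show ?thesis by (rule LIMSEQ_const_iff[THEN iffD1])
qed

lemma euler_prod:
  fixes r d z :: complex
  assumes r: "norm r < 1"
  shows "(\<lambda>k. 1 + d * r ^ k * z) has_prod (\<Sum>n. eul r d n * z ^ n)"
proof (rule prod_fe[OF r, where G = "\<lambda>y. \<Sum>n. eul r d n * y ^ n"])
  show "isCont (\<lambda>y. \<Sum>n. eul r d n * y ^ n) 0"
    by (rule isCont_powser_converges_everywhere) (rule eul_summable[OF r])
  show "(\<Sum>n. eul r d n * 0 ^ n) = 1" by simp
  have r1: "r ^ Suc n \<noteq> 1" for n
  proof
    assume "r ^ Suc n = 1"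
    then have "norm r ^ Suc n = 1" by (metis norm_one norm_power)
    moreover have "norm r ^ Suc n < 1" by (subst power_less_one_iff) (use r in auto)
    ultimately show False by simp
  qed
  fix k
  show "(\<Sum>n. eul r d n * (r ^ k * z) ^ n) = (1 + d * r ^ k * z) * (\<Sum>n. eul r d n * (r ^ Suc k * z) ^ n)"
    using fe_series[of "eul r d" r d "r ^ k * z", OF eul_rec[OF r1] eul_summable[OF r] eul_summable[OF r]]
    by (simp add: mult_ac)
next
  have "summable (\<lambda>k. norm (d * z) * norm r ^ k)"
    using r by (intro summable_mult summable_geometric) auto
  then have "summable (\<lambda>k. norm ((1 + d * r ^ k * z) - 1))"
    by (simp add: norm_mult norm_power mult_ac)
  then show "convergent_prod (\<lambda>k. 1 + d * r ^ k * z)"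
    by (intro abs_convergent_prod_imp_convergent_prod summable_imp_abs_convergent_prod)
qed


lemma pow_ne_1:
  fixes r :: complex
  assumes "norm r \<noteq> 1"
  shows "r ^ Suc n \<noteq> 1"
proof
  assume "r ^ Suc n = 1"
  then have "norm r ^ Suc n = 1 ^ Suc n" by (metis norm_one norm_power power_one)
  then have "norm r = 1" by (rule power_eq_imp_eq_base) auto
  with assms show False by simp
qed

lemma binet:
  fixes a b s t :: real
  assumes st: "s = a + b" "t = - (a * b)" and ab: "a \<noteq> b"
  shows "gfib s t n = (a ^ n - b ^ n) / (a - b)"
proof -
  have "gfib s t n = (a ^ n - b ^ n) / (a - b) \<and> gfib s t (Suc n) = (a ^ Suc n - b ^ Suc n) / (a - b)"
  proof (induction n)
    case 0 then show ?case using ab by simp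
  next
    case (Suc n)
    have "gfib s t (Suc (Suc n)) = s * gfib s t (Suc n) + t * gfib s t n" by simp
    also have "\<dots> = (a + b) * ((a ^ Suc n - b ^ Suc n) / (a - b)) + (- (a * b)) * ((a ^ n - b ^ n) / (a - b))"
      using Suc.IH by (simp only: st)
    also have "\<dots> = ((a + b) * (a ^ Suc n - b ^ Suc n) + (- (a * b)) * (a ^ n - b ^ n)) / (a - b)"
      by (simp only: times_divide_eq_right add_divide_distrib)
    also have "(a + b) * (a ^ Suc n - b ^ Suc n) + (- (a * b)) * (a ^ n - b ^ n) = a ^ Suc (Suc n) - b ^ Suc (Suc n)"
      by (simp add: algebra_simps)
    finally have "gfib s t (Suc (Suc n)) = (a ^ Suc (Suc n) - b ^ Suc (Suc n)) / (a - b)" .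
    with Suc.IH show ?case by blast
  qed
  then show ?thesis by simp
qed


context
  fixes a b s t :: real
  assumes a0: "a \<noteq> 0" and b0: "b \<noteq> 0" and q1: "\<bar>b / a\<bar> \<noteq> 1"
    and bin: "\<And>n. gfib s t n = (a ^ n - b ^ n) / (a - b)"
    and bdef: "phi' s t = b"
begin

lemma ab_ne: "a - b \<noteq> 0" using q1 a0 by auto

lemma pow_ne: "n > 0 \<Longrightarrow> a ^ n - b ^ n \<noteq> 0"
proof
  assume n: "n > 0" and "a ^ n - b ^ n = 0"
  then have "\<bar>a\<bar> ^ n = \<bar>b\<bar> ^ n" by (metis eq_iff_diff_eq_0 power_abs)
  then have "\<bar>a\<bar> = \<bar>b\<bar>" by (rule power_eq_imp_eq_base[OF _ abs_ge_zero abs_ge_zero n])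
  then show False using q1 a0 b0 by (simp add: abs_divide)
qed

lemma gfib_nz: "n > 0 \<Longrightarrow> gfib s t n \<noteq> 0"
  using pow_ne ab_ne by (simp add: bin)

lemma fibotorial_nz: "fibotorial s t n \<noteq> 0"
  unfolding fibotorial_def using gfib_nz by (auto simp: prod_zero_iff)

lemma fibotorial_Suc: "fibotorial s t (Suc n) = fibotorial s t n * gfib s t (Suc n)"
  unfolding fibotorial_def by (simp add: prod.nat_ivl_Suc')

lemma choose2_Suc: "Suc n choose 2 = (n choose 2) + n"
  by (simp add: numeral_2_eq_2)

lemma ratio_real: "b ^ n / gfib s t (Suc n) = (a - b) / a * (b / a) ^ n / (1 - (b / a) ^ Suc n)"
proof -
  have h: "a ^ Suc n - b ^ Suc n \<noteq> 0" by (rule pow_ne) simp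
  have "1 - (b / a) ^ Suc n = (a ^ Suc n - b ^ Suc n) / a ^ Suc n"
    using a0 by (simp add: power_divide field_simps)
  then show ?thesis using h a0 ab_ne by (simp add: bin power_divide field_simps)
qed

lemma coef_eul: "Exp'_coeff s t n = eul (of_real (b / a)) (of_real ((a - b) / a)) n"
proof (induction n)
  case 0 then show ?case by (simp add: Exp'_coeff_def fibotorial_def binomial_eq_0)
next
  case (Suc n)
  have "Exp'_coeff s t (Suc n) = Exp'_coeff s t n * of_real (b ^ n / gfib s t (Suc n))"
    using fibotorial_nz[of n] gfib_nz[of "Suc n"]
    by (simp add: Exp'_coeff_def fibotorial_Suc choose2_Suc power_add bdef)
  also have "\<dots> = eul (of_real (b / a)) (of_real ((a - b) / a)) n *
     (of_real ((a - b) / a) * of_real (b / a) ^ n / (1 - of_real (b / a) ^ Suc n))"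
    by (simp only: Suc.IH ratio_real) simp
  finally show ?case by (simp only: eul_Suc)
qed


lemma part1:
  assumes lt: "\<bar>b / a\<bar> < 1"
  shows "\<forall>z::complex. summable (\<lambda>n. Exp'_coeff s t n * z ^ n) \<and>
         (\<lambda>k. 1 + complex_of_real ((a - b) * b ^ k / a ^ (k + 1)) * z) has_prod Exp' s t z"
proof (intro allI conjI)
  fix z :: complex
  define r where "r = complex_of_real (b / a)"
  define d where "d = complex_of_real ((a - b) / a)"
  have nr: "norm r < 1" using lt by (simp add: r_def norm_divide abs_divide)
  have E: "(\<lambda>n. Exp'_coeff s t n * z ^ n) = (\<lambda>n. eul r d n * z ^ n)"
    using coef_eul by (simp add: r_def d_def)
  show "summable (\<lambda>n. Exp'_coeff s t n * z ^ n)" unfolding E by (rule eul_summable[OF nr])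
  have f: "(\<lambda>k. 1 + complex_of_real ((a - b) * b ^ k / a ^ (k + 1)) * z) = (\<lambda>k. 1 + d * r ^ k * z)"
  proof
    fix k
    have "(a - b) * b ^ k / a ^ (k + 1) = (a - b) / a * (b / a) ^ k"
      by (simp add: power_divide)
    then show "1 + complex_of_real ((a - b) * b ^ k / a ^ (k + 1)) * z = 1 + d * r ^ k * z"
      by (simp add: r_def d_def)
  qed
  show "(\<lambda>k. 1 + complex_of_real ((a - b) * b ^ k / a ^ (k + 1)) * z) has_prod Exp' s t z"
    unfolding f Exp'_def E by (rule euler_prod[OF nr])
qed

lemma factor_eq:
  fixes X Y z :: complex
  assumes "X \<noteq> 0"
  shows "X / (X + X * Y * z) = inverse (1 + Y * z)"
proof -
  have "X + X * Y * z = X * (1 + Y * z)" by (simp add: algebra_simps)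
  then show ?thesis using assms by (simp add: divide_inverse inverse_mult_distrib)
qed

context
  assumes gt: "\<bar>b / a\<bar> > 1"
begin

definition "pp = complex_of_real (a / b)"
definition "d2 = complex_of_real ((a - b) / b)"
definition "HH z = (\<Sum>n. eul pp d2 n * z ^ n)"

lemma np: "norm pp < 1"
proof -
  have "\<bar>b\<bar> / \<bar>a\<bar> > 1" using gt by (simp add: abs_divide)
  then have "\<bar>a\<bar> < \<bar>b\<bar>" using a0 by (simp add: less_divide_eq)
  then have "\<bar>a\<bar> / \<bar>b\<bar> < 1" using b0 by (simp add: divide_less_eq)
  then show ?thesis by (simp add: pp_def norm_divide)
qed

lemma hH: "(\<lambda>k. 1 + d2 * pp ^ k * z) has_prod HH z"
  unfolding HH_def by (rule euler_prod[OF np])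

lemma fac: "(\<lambda>k. complex_of_real (b ^ (k + 1)) /
               (complex_of_real (b ^ (k + 1)) + complex_of_real ((a - b) * a ^ k) * z)) =
            (\<lambda>k. inverse (1 + d2 * pp ^ k * z))"
proof
  fix k
  have "(a - b) * a ^ k = b ^ (k + 1) * ((a - b) / b * (a / b) ^ k)"
    using b0 by (simp add: power_divide field_simps)
  then have "complex_of_real ((a - b) * a ^ k) = complex_of_real (b ^ (k + 1)) * (d2 * pp ^ k)"
    by (simp add: d2_def pp_def)
  then show "complex_of_real (b ^ (k + 1)) /
               (complex_of_real (b ^ (k + 1)) + complex_of_real ((a - b) * a ^ k) * z) =
            inverse (1 + d2 * pp ^ k * z)"
    using factor_eq[of "complex_of_real (b ^ (k + 1))" "d2 * pp ^ k" z] b0 by (simp add: mult_ac)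
qed

lemma part2b: "\<forall>z::complex. (\<forall>k. complex_of_real (b ^ (k + 1)) + complex_of_real ((a - b) * a ^ k) * z \<noteq> 0) \<longrightarrow>
         convergent_prod (\<lambda>k. complex_of_real (b ^ (k + 1)) /
               (complex_of_real (b ^ (k + 1)) + complex_of_real ((a - b) * a ^ k) * z))"
  unfolding fac
proof (intro allI impI)
  fix z :: complex
  have "convergent_prod (\<lambda>k. 1 + d2 * pp ^ k * z)" using hH[of z] by (simp only: has_prod_iff)
  then show "convergent_prod (\<lambda>k. inverse (1 + d2 * pp ^ k * z))" by (rule convergent_prod_inverse)
qed

lemma part2c: "(\<lambda>z. \<Prod>k. complex_of_real (b ^ (k + 1)) /
               (complex_of_real (b ^ (k + 1)) + complex_of_real ((a - b) * a ^ k) * z))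
        meromorphic_on UNIV"
proof -
  have eq: "(\<lambda>z. \<Prod>k. complex_of_real (b ^ (k + 1)) /
               (complex_of_real (b ^ (k + 1)) + complex_of_real ((a - b) * a ^ k) * z)) = (\<lambda>z. inverse (HH z))"
    unfolding fac
  proof
    fix z :: complex
    have c: "convergent_prod (\<lambda>k. 1 + d2 * pp ^ k * z)" and p: "prodinf (\<lambda>k. 1 + d2 * pp ^ k * z) = HH z"
      using hH[of z] by (simp_all only: has_prod_iff)
    show "(\<Prod>k. inverse (1 + d2 * pp ^ k * z)) = inverse (HH z)"
      using prodinf_inverse[OF c] p by simp
  qed
  have "HH holomorphic_on UNIV"
    unfolding holomorphic_on_def field_differentiable_def HH_def
    using termdiffs_strong_converges_everywhere[OF eul_summable[OF np]] by blast
  then have "HH analytic_on UNIV" by (simp add: analytic_on_open)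
  then show ?thesis unfolding eq
    by (intro meromorphic_on_inverse analytic_on_imp_meromorphic_on)
qed

lemma part2a: "\<forall>z::complex. ereal (norm z) < conv_radius (Exp'_coeff s t) \<longrightarrow>
         summable (\<lambda>n. Exp'_coeff s t n * z ^ n) \<and>
         (\<lambda>k. complex_of_real (b ^ (k + 1)) /
               (complex_of_real (b ^ (k + 1)) + complex_of_real ((a - b) * a ^ k) * z))
            has_prod Exp' s t z"
proof (intro allI impI conjI)
  fix z :: complex
  assume cz: "ereal (norm z) < conv_radius (Exp'_coeff s t)"
  show "summable (\<lambda>n. Exp'_coeff s t n * z ^ n)" by (rule summable_in_conv_radius[OF cz])
  define r where "r = complex_of_real (b / a)"
  define d where "d = complex_of_real ((a - b) / a)"
  define E where "E w = (\<Sum>n. eul r d n * w ^ n)" for w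
  have ce: "Exp'_coeff s t = eul r d" by (rule ext) (simp add: coef_eul r_def d_def)
  have nr: "norm r \<noteq> 1" using q1 by (simp add: r_def norm_divide abs_divide)
  have sE: "summable (\<lambda>n. eul r d n * w ^ n)" if "norm w \<le> norm z" for w
  proof -
    have "ereal (norm w) < conv_radius (Exp'_coeff s t)" using that cz
      by (meson ereal_less_eq(3) order_le_less_trans)
    then show ?thesis using summable_in_conv_radius ce by metis
  qed
  have pk: "norm (pp ^ k * z) \<le> norm z" for k
  proof -
    have "norm (pp ^ k) \<le> 1" using np by (simp add: norm_power power_le_one)
    then show ?thesis by (simp add: norm_mult mult_left_le_one_le)
  qed
  have rp: "r * pp = 1" using a0 b0 by (simp add: r_def pp_def)
  have dp: "d * pp = d2" using a0 b0 by (simp add: d_def pp_def d2_def field_simps)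
  define K where "K w = E w * HH w" for w
  have K0: "K 0 = 1" by (simp add: K_def E_def HH_def)
  have "K z = K 0"
  proof (cases "z = 0")
    case True then show ?thesis by simp
  next
    case False
    have cE: "isCont E 0" unfolding E_def
      by (rule isCont_powser[of _ "complex_of_real (norm z)"]) (use sE[of "complex_of_real (norm z)"] False in auto)
    have cH: "isCont HH 0" unfolding HH_def
      by (rule isCont_powser_converges_everywhere) (rule eul_summable[OF np])
    have cK: "isCont K 0" unfolding K_def using cE cH by (rule isCont_mult)
    show ?thesis
    proof (rule const_fe[OF np cK])
      fix k
      define y where "y = pp ^ k * z"
      have y1: "pp ^ Suc k * z = pp * y" by (simp add: y_def)
      have sy: "summable (\<lambda>n. eul r d n * y ^ n)" using pk[of k] sE by (simp add: y_def)
      have spy: "summable (\<lambda>n. eul r d n * (pp * y) ^ n)" using pk[of "Suc k"] sE by (simp add: y_def mult.assoc)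
      have ry: "r * (pp * y) = y" using rp by (metis mult.assoc mult_1)
      have dy: "d * (pp * y) = d2 * y" using dp by (metis mult.assoc)
      have "E (pp * y) = (1 + d * (pp * y)) * E (r * (pp * y))"
        unfolding E_def
      proof (rule fe_series[of "eul r d" r d "pp * y", OF eul_rec[OF pow_ne_1[OF nr]] spy])
        show "summable (\<lambda>n. eul r d n * (r * (pp * y)) ^ n)" unfolding ry by (rule sy)
      qed
      then have e1: "E (pp * y) = (1 + d2 * y) * E y" by (simp only: ry dy)
      have e2: "HH y = (1 + d2 * y) * HH (pp * y)"
        using fe_series[of "eul pp d2" pp d2 y, OF eul_rec[OF pow_ne_1] eul_summable[OF np] eul_summable[OF np]] np
        unfolding HH_def by simp
      show "K (pp ^ Suc k * z) = K (pp ^ k * z)"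
        unfolding y1 y_def[symmetric] K_def e1 e2 by (simp add: mult_ac)
    qed
  qed
  then have EH: "HH z * E z = 1" using K0 by (simp add: K_def mult.commute)
  have "(\<lambda>k. inverse (1 + d2 * pp ^ k * z)) has_prod inverse (HH z)"
    by (rule has_prod_inverse[OF hH])
  also have "inverse (HH z) = Exp' s t z"
    using inverse_unique[OF EH] by (simp add: Exp'_def ce E_def)
  finally show "(\<lambda>k. complex_of_real (b ^ (k + 1)) /
               (complex_of_real (b ^ (k + 1)) + complex_of_real ((a - b) * a ^ k) * z))
            has_prod Exp' s t z" unfolding fac .
qed

end

end

theorem mainTheorem10:
  fixes s t :: real
  assumes "s \<noteq> 0" and "t \<noteq> 0" and "s\<^sup>2 + 4 * t > 0"
  defines "q \<equiv> phi' s t / phi s t"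
  shows
   "(\<bar>q\<bar> < 1 \<longrightarrow>
      (\<forall>z::complex.
         summable (\<lambda>n. Exp'_coeff s t n * z ^ n) \<and>
         (\<lambda>k. 1 + complex_of_real ((phi s t - phi' s t) * phi' s t ^ k / phi s t ^ (k + 1)) * z)
            has_prod Exp' s t z))
  \<and> (\<bar>q\<bar> > 1 \<longrightarrow>
      (\<forall>z::complex. ereal (norm z) < conv_radius (Exp'_coeff s t) \<longrightarrow>
         summable (\<lambda>n. Exp'_coeff s t n * z ^ n) \<and>
         (\<lambda>k. complex_of_real (phi' s t ^ (k + 1)) /
               (complex_of_real (phi' s t ^ (k + 1)) + complex_of_real ((phi s t - phi' s t) * phi s t ^ k) * z))
            has_prod Exp' s t z)
    \<and> (\<forall>z::complex. (\<forall>k. complex_of_real (phi' s t ^ (k + 1)) + complex_of_real ((phi s t - phi' s t) * phi s t ^ k) * z \<noteq> 0) \<longrightarrow>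
         convergent_prod (\<lambda>k. complex_of_real (phi' s t ^ (k + 1)) /
               (complex_of_real (phi' s t ^ (k + 1)) + complex_of_real ((phi s t - phi' s t) * phi s t ^ k) * z)))
    \<and> (\<lambda>z. \<Prod>k. complex_of_real (phi' s t ^ (k + 1)) /
               (complex_of_real (phi' s t ^ (k + 1)) + complex_of_real ((phi s t - phi' s t) * phi s t ^ k) * z))
        meromorphic_on UNIV)"
  proof -
  define a where "a = phi s t"
  define b where "b = phi' s t"
  define sq where "sq = sqrt (s\<^sup>2 + 4 * t)"
  have sq0: "sq > 0" using assms(3) by (simp add: sq_def)
  have sq2: "sq * sq = s\<^sup>2 + 4 * t" using assms(3) by (simp add: sq_def)
  have apb: "s = a + b" by (simp add: a_def b_def phi_def phi'_def field_simps)
  have amb: "a - b = sq" by (simp add: a_def b_def phi_def phi'_def sq_def field_simps)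
  have "a * b = (s * s - sq * sq) / 4" by (simp add: a_def b_def phi_def phi'_def sq_def field_simps)
  then have abt: "t = - (a * b)" using sq2 by (simp add: power2_eq_square)
  have a0: "a \<noteq> 0" and b0: "b \<noteq> 0" using abt assms(2) by auto
  have anb: "a \<noteq> b" using amb sq0 by auto
  have q1: "\<bar>b / a\<bar> \<noteq> 1"
  proof
    assume "\<bar>b / a\<bar> = 1"
    then have "\<bar>b\<bar> = \<bar>a\<bar>" using a0 by (simp add: abs_divide divide_eq_1_iff)
    then have "b = a \<or> b = - a" by (auto simp: abs_eq_iff)
    then show False using anb apb assms(1) by auto
  qed
  have bin: "\<And>n. gfib s t n = (a ^ n - b ^ n) / (a - b)" by (rule binet[OF apb abt anb])
  have bdef: "phi' s t = b" by (simp add: b_def)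
  note P1 = part1[OF a0 b0 q1 bin bdef]
  note P2a = part2a[OF a0 b0 q1 bin bdef]
  note P2b = part2b[OF a0 b0 q1 bin bdef]
  note P2c = part2c[OF a0 b0 q1 bin bdef]
  show ?thesis unfolding q_def a_def[symmetric] b_def[symmetric]
    using P1 P2a P2b P2c by blast
qed

end
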